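(* Suppose $0<\eta<\omega_1$ and $\mathcal{F}_1,\mathcal{F}_2,\dots$ are regular families containing all singletons with $CB(\mathcal{F}_j)<\omega^\eta$ for each $j$. Fix a sequence of positive numbers $(\varpi_n)_{n=1}^\infty$ converging to $0$. Let $Z_0$ be the completion of $c_{00}$ with respect to the norm $[x]_0=\sup\{\varpi_j\|Ex\|_{\ell_1}:j\in\mathbb{N},E\in\mathcal{F}_j\}$. Then the canonical basis of $Z_0$ is $\eta$-weakly null.
   Context: For $E\subset\mathbb{N}$ and $x=\sum a_ne_n\in c_{00}$, $Ex=\sum_{n\in E}a_ne_n$. A family $\mathcal{F}$ of finite subsets of $\mathbb{N}$ is regular if it is hereditary (closed under subsets), spreading (if $(m_i)_{i=1}^k\in\mathcal{F}$ in increasing order and $n_1<\dots<n_k$ with $m_i\leqslant n_i$, then $(n_i)_{i=1}^k\in\mathcal{F}$) and compact in $2^{\mathbb{N}}\cong\{0,1\}^{\mathbb{N}}$. $CB(\mathcal{F})$ is the Cantor–Bendixson index: $\mathcal{F}'$ removes maximal members, iterate transfinitely (intersections at limits), $CB(\mathcal{F})$ is the least $\xi$ with $\mathcal{F}^\xi=\varnothing$. Schreier families: $\mathcal{S}_0=\{\varnothing\}\cup\{\{n\}\}$; $\mathcal{S}=\{\varnothing\}\cup\{E:|E|\leqslant\min E\}$; $\mathcal{G}[\mathcal{F}]=\{\varnothing\}\cup\{\bigcup_{i=1}^nE_i:\varnothing\neq E_i\in\mathcal{F},\max E_i<\min E_{i+1},(\min E_i)\in\mathcal{G}\}$; $\mathcal{S}_{\xi+1}=\mathcal{S}[\mathcal{S}_\xi]$;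 for limit $\xi$, with fixed $\xi_n\uparrow\xi$, $\mathcal{S}_{\xi_n+1}\subset\mathcal{S}_{\xi_{n+1}}$, $\mathcal{S}_\xi=\{\varnothing\}\cup\{E\neq\varnothing:E\in\mathcal{S}_{\xi_{\min E}+1}\}$. For $\xi<\omega_1$, a bounded sequence $(x_n)$ is an $\ell_1^\xi+$-spreading model if $\inf\{\|x\|:F\in\mathcal{S}_\xi,x\in\mathrm{co}(x_n:n\in F)\}>0$; it is $\xi$-weakly null if no subsequence is an $\ell_1^\xi+$-spreading model. *)

theory Defs
  imports "HOL-Analysis.Analysis"
begin

text \<open>The paper's \<open>\<nat>\<close> is \<open>{1,2,...}\<close>; we use HOL's \<open>nat\<close> and
  restrict to positive indices. Vectors of \<open>c\<^sub>0\<^sub>0\<close> are functions \<open>nat \<Rightarrow> real\<close>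
  (coordinate \<open>n\<close> = coefficient of \<open>e\<^sub>n\<close>).\<close>

text \<open>A countable ordinal is represented by a tree: \<open>OZ\<close> = 0, \<open>OS a\<close> = a+1,
  \<open>OL f\<close> = sup of the \<open>f n\<close>. Every ordinal \<open>< \<omega>\<^sub>1\<close> has such a notation.
  The limit node also carries the fundamental sequence used for Schreier families.\<close>

datatype cord = OZ | OS cord | OL "nat \<Rightarrow> cord"

inductive ole :: "cord \<Rightarrow> cord \<Rightarrow> bool" where
  ole_zero: "ole OZ b"
| ole_suc: "ole a b \<Longrightarrow> ole (OS a) (OS b)"
| ole_limR: "ole a (f n) \<Longrightarrow> ole a (OL f)"
| ole_limL: "(\<And>n. ole (f n) b) \<Longrightarrow> ole (OL f) b"

definition olt :: "cord \<Rightarrow> cord \<Rightarrow> bool" where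
  "olt a b \<longleftrightarrow> ole (OS a) b"

primrec oadd :: "cord \<Rightarrow> cord \<Rightarrow> cord" where
  "oadd a OZ = a"
| "oadd a (OS b) = OS (oadd a b)"
| "oadd a (OL f) = OL (\<lambda>n. oadd a (f n))"

primrec omult_nat :: "cord \<Rightarrow> nat \<Rightarrow> cord" where
  "omult_nat a 0 = OZ"
| "omult_nat a (Suc n) = oadd (omult_nat a n) a"

primrec omega_pow :: "cord \<Rightarrow> cord" where
  "omega_pow OZ = OS OZ"
| "omega_pow (OS a) = OL (\<lambda>n. omult_nat (omega_pow a) n)"
| "omega_pow (OL f) = OL (\<lambda>n. omega_pow (f n))"

definition fin_subsets :: "nat set set" where
  "fin_subsets = {E. finite E \<and> E \<subseteq> {1..}}"

definition hereditary :: "nat set set \<Rightarrow> bool" where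
  "hereditary \<F> \<longleftrightarrow> (\<forall>E\<in>\<F>. \<forall>G. G \<subseteq> E \<longrightarrow> G \<in> \<F>)"

definition spreading :: "nat set set \<Rightarrow> bool" where
  "spreading \<F> \<longleftrightarrow> (\<forall>ms ns. sorted_wrt (<) ms \<and> sorted_wrt (<) ns \<and> length ms = length ns
      \<and> set ms \<in> \<F> \<and> (\<forall>i<length ms. ms ! i \<le> ns ! i) \<longrightarrow> set ns \<in> \<F>)"

text \<open>Compactness in \<open>2\<^sup>\<nat> \<cong> {0,1}\<^sup>\<nat>\<close> (product topology), via indicator functions.\<close>
definition compact_family :: "nat set set \<Rightarrow> bool" where
  "compact_family \<F> \<longleftrightarrow> compact ((\<lambda>E. indicator E :: nat \<Rightarrow> real) ` \<F>)"

definition regular_family :: "nat set set \<Rightarrow> bool" where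
  "regular_family \<F> \<longleftrightarrow> \<F> \<subseteq> fin_subsets \<and> hereditary \<F> \<and> spreading \<F> \<and> compact_family \<F>"

definition contains_singletons :: "nat set set \<Rightarrow> bool" where
  "contains_singletons \<F> \<longleftrightarrow> (\<forall>n\<ge>1. {n} \<in> \<F>)"

definition cb_deriv :: "nat set set \<Rightarrow> nat set set" where
  "cb_deriv \<F> = {E\<in>\<F>. \<exists>G\<in>\<F>. E \<subset> G}"

primrec cb_iter :: "nat set set \<Rightarrow> cord \<Rightarrow> nat set set" where
  "cb_iter \<F> OZ = \<F>"
| "cb_iter \<F> (OS a) = cb_deriv (cb_iter \<F> a)"
| "cb_iter \<F> (OL f) = (\<Inter>n. cb_iter \<F> (f n))"

text \<open>\<open>CB(\<F>) < \<alpha>\<close>: the least \<open>\<xi>\<close> with \<open>\<F>\<^sup>\<xi> = \<emptyset>\<close> is below \<open>\<alpha>\<close>,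
  i.e. some \<open>\<xi> < \<alpha>\<close> has \<open>\<F>\<^sup>\<xi> = \<emptyset>\<close>.\<close>
definition cb_less :: "nat set set \<Rightarrow> cord \<Rightarrow> bool" where
  "cb_less \<F> \<alpha> \<longleftrightarrow> (\<exists>\<xi>. olt \<xi> \<alpha> \<and> cb_iter \<F> \<xi> = {})"

definition schreier0 :: "nat set set" where
  "schreier0 = {{}} \<union> {{n} | n. n \<ge> 1}"

definition schreier1 :: "nat set set" where
  "schreier1 = {{}} \<union> {E. finite E \<and> E \<subseteq> {1..} \<and> card E \<le> Min E}"

definition fam_comp :: "nat set set \<Rightarrow> nat set set \<Rightarrow> nat set set" where
  "fam_comp \<G> \<F> = {{}} \<union> {\<Union>(set Es) | Es. Es \<noteq> [] \<and> (\<forall>E\<in>set Es. E \<in> \<F> \<and> E \<noteq> {})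
      \<and> (\<forall>i. Suc i < length Es \<longrightarrow> Max (Es ! i) < Min (Es ! Suc i))
      \<and> Min ` set Es \<in> \<G>}"

primrec schreier :: "cord \<Rightarrow> nat set set" where
  "schreier OZ = schreier0"
| "schreier (OS a) = fam_comp schreier1 (schreier a)"
| "schreier (OL f) = {{}} \<union> {E. E \<noteq> {} \<and> E \<in> fam_comp schreier1 (schreier (f (Min E)))}"

text \<open>Admissible notations: at every limit node \<open>\<xi> = OL f\<close> the fundamental sequence
  \<open>\<xi>\<^sub>1 < \<xi>\<^sub>2 < \<dots>\<close> (indices \<open>n \<ge> 1\<close>; the unused \<open>f 0\<close> does not exceed \<open>f 1\<close>,
  so \<open>\<xi> = sup\<^sub>n \<xi>\<^sub>n\<close>) is strictly increasing and satisfies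
  \<open>\<S>\<^bsub>\<xi>\<^sub>n+1\<^esub> \<subseteq> \<S>\<^bsub>\<xi>\<^sub>n\<^sub>+\<^sub>1\<^esub>\<close>.\<close>
primrec admissible :: "cord \<Rightarrow> bool" where
  "admissible OZ = True"
| "admissible (OS a) = admissible a"
| "admissible (OL f) = ((\<forall>n. admissible (f n)) \<and> ole (f 0) (f 1)
      \<and> (\<forall>n\<ge>1. olt (f n) (f (Suc n)))
      \<and> (\<forall>n\<ge>1. schreier (OS (f n)) \<subseteq> schreier (f (Suc n))))"

text \<open>\<open>N\<close> is a norm on \<open>c\<^sub>0\<^sub>0\<close>, \<open>x\<close> a sequence \<open>(x\<^sub>n)\<^sub>n\<^sub>\<ge>\<^sub>1\<close> in \<open>c\<^sub>0\<^sub>0\<close>.\<close>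
definition bounded_seq :: "((nat \<Rightarrow> real) \<Rightarrow> real) \<Rightarrow> (nat \<Rightarrow> nat \<Rightarrow> real) \<Rightarrow> bool" where
  "bounded_seq N x \<longleftrightarrow> (\<exists>M. \<forall>n\<ge>1. N (x n) \<le> M)"

definition l1_spreading_model ::
  "((nat \<Rightarrow> real) \<Rightarrow> real) \<Rightarrow> cord \<Rightarrow> (nat \<Rightarrow> nat \<Rightarrow> real) \<Rightarrow> bool" where
  "l1_spreading_model N \<xi> x \<longleftrightarrow> bounded_seq N x \<and>
     (\<exists>\<delta>>0. \<forall>F\<in>schreier \<xi>. \<forall>a::nat \<Rightarrow> real.
        (\<forall>n\<in>F. a n \<ge> 0) \<and> (\<Sum>n\<in>F. a n) = 1 \<longrightarrow> N (\<lambda>i. \<Sum>n\<in>F. a n * x n i) \<ge> \<delta>)"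

definition weakly_null_xi ::
  "((nat \<Rightarrow> real) \<Rightarrow> real) \<Rightarrow> cord \<Rightarrow> (nat \<Rightarrow> nat \<Rightarrow> real) \<Rightarrow> bool" where
  "weakly_null_xi N \<xi> x \<longleftrightarrow> bounded_seq N x \<and>
     (\<forall>k. strict_mono k \<longrightarrow> \<not> l1_spreading_model N \<xi> (x \<circ> k))"

definition unit_vec :: "nat \<Rightarrow> nat \<Rightarrow> real" where
  "unit_vec n = (\<lambda>i. if i = n then 1 else 0)"

definition z0_norm :: "(nat \<Rightarrow> real) \<Rightarrow> (nat \<Rightarrow> nat set set) \<Rightarrow> (nat \<Rightarrow> real) \<Rightarrow> real" where
  "z0_norm w \<F> x = Sup {w j * (\<Sum>i\<in>E. \<bar>x i\<bar>) | j E. j \<ge> 1 \<and> E \<in> \<F> j}"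

end

theory Submission
  imports Defs
begin

lemma ole_refl: "ole a a"
proof (induction a)
  case (OL f) then show ?case by (metis ole_limL ole_limR rangeI)
qed (auto intro: ole.intros)

lemma ole_trans_suc: "ole x c \<Longrightarrow> x = OS b \<Longrightarrow> (\<And>c. ole b c \<Longrightarrow> ole a c) \<Longrightarrow> ole (OS a) c"
  by (induction x c rule: ole.induct) (auto intro: ole.intros)

lemma ole_trans_lim: "ole x c \<Longrightarrow> x = OL f \<Longrightarrow> (\<And>c. ole (f n) c \<Longrightarrow> ole a c) \<Longrightarrow> ole a c"
  by (induction x c rule: ole.induct) (auto intro: ole.intros)

lemma ole_trans: "ole a b \<Longrightarrow> ole b c \<Longrightarrow> ole a c"
proof (induction a b arbitrary: c rule: ole.induct)
  case (ole_zero b) show ?case by (rule ole.ole_zero)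
next
  case (ole_suc a b) then show ?case using ole_trans_suc by blast
next
  case (ole_limR a f n) then show ?case using ole_trans_lim by blast
next
  case (ole_limL f b) then show ?case by (auto intro: ole.intros)
qed

lemma ole_OS: "ole a (OS a)"
proof (induction a)
  case OZ then show ?case by (rule ole_zero)
next
  case (OS a) then show ?case by (rule ole_suc)
next
  case (OL f)
  show ?case
  proof (rule ole_limL)
    fix n
    have "ole (f n) (OS (f n))" using OL by simp
    moreover have "ole (OS (f n)) (OS (OL f))" by (rule ole_suc, rule ole_limR, rule ole_refl)
    ultimately show "ole (f n) (OS (OL f))" by (rule ole_trans)
  qed
qed

lemma olt_ole: "olt a b \<Longrightarrow> ole a b"
  unfolding olt_def using ole_OS ole_trans by blast

lemma oadd_ge: "ole a (oadd a b)"
proof (induction b)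
  case OZ then show ?case by (simp add: ole_refl)
next
  case (OS b) then show ?case using ole_OS ole_trans by simp
next
  case (OL f) then show ?case by (simp, meson ole_limR rangeI)
qed

lemma oadd_mono_r: "ole b b' \<Longrightarrow> ole (oadd a b) (oadd a b')"
proof (induction b b' rule: ole.induct)
  case (ole_zero b) then show ?case by (simp add: oadd_ge)
next
  case (ole_suc a b) then show ?case by (simp add: ole.ole_suc)
next
  case (ole_limR b f n) then show ?case by (simp add: ole.ole_limR)
next
  case (ole_limL f b) then show ?case by (simp add: ole.ole_limL)
qed

lemma oadd_mono_l: "ole a a' \<Longrightarrow> ole (oadd a b) (oadd a' b)"
proof (induction b)
  case OZ then show ?case by simp
next
  case (OS b) then show ?case by (simp add: ole.ole_suc)
next
  case (OL f)
  then show ?case by (simp, meson ole.ole_limL ole.ole_limR rangeI)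
qed

lemma omult_mono: "ole a a' \<Longrightarrow> ole (omult_nat a n) (omult_nat a' n)"
  by (induction n) (auto simp: ole_refl intro: ole_trans oadd_mono_l oadd_mono_r)

lemma omega_pow_pos: "ole (OS OZ) (omega_pow b)"
proof (induction b)
  case OZ then show ?case by (simp add: ole_refl)
next
  case (OS b)
  have "ole (OS OZ) (omult_nat (omega_pow b) 1)"
    using OS ole_trans oadd_mono_r by fastforce
  then show ?case by (simp del: omult_nat.simps, meson ole_limR)
next
  case (OL f) then show ?case by (simp, meson ole_limR rangeI)
qed

lemma omega_pow_mono: "ole a b \<Longrightarrow> ole (omega_pow a) (omega_pow b)"
proof (induction a b rule: ole.induct)
  case (ole_zero b) then show ?case by (simp add: omega_pow_pos)
next
  case (ole_suc a b) then show ?case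
    by (simp, meson ole.ole_limL ole.ole_limR omult_mono)
next
  case (ole_limR a f n) then show ?case by (simp add: ole.ole_limR)
next
  case (ole_limL f b) then show ?case by (simp add: ole.ole_limL)
qed

lemma cb_iter_sub: "cb_iter H z \<subseteq> H"
  by (induction z) (auto simp: cb_deriv_def)

lemma cb_deriv_mono: "A \<subseteq> B \<Longrightarrow> cb_deriv A \<subseteq> cb_deriv B"
  unfolding cb_deriv_def by blast

lemma cb_iter_antitone: "ole a b \<Longrightarrow> cb_iter H b \<subseteq> cb_iter H a"
proof (induction a b rule: ole.induct)
  case (ole_zero b) then show ?case using cb_iter_sub by simp
next
  case (ole_suc a b) then show ?case by (simp add: cb_deriv_mono)
next
  case (ole_limR a f n) then show ?case by auto
next
  case (ole_limL f b) then show ?case by auto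
qed

lemma cb_iter_oadd: "cb_iter H (oadd a b) = cb_iter (cb_iter H a) b"
  by (induction b) auto

lemma hereditary_deriv:
  assumes h: "hereditary H" shows "hereditary (cb_deriv H)"
  unfolding hereditary_def
proof (intro ballI allI impI)
  fix E G assume E: "E \<in> cb_deriv H" and G: "G \<subseteq> E"
  from E have EH: "E \<in> H" unfolding cb_deriv_def by blast
  from E obtain G' where G': "G' \<in> H" "E \<subset> G'" unfolding cb_deriv_def by blast
  have "G \<in> H" using h EH G unfolding hereditary_def by blast
  moreover have "G \<subset> G'" using G G'(2) by (rule subset_psubset_trans)
  ultimately show "G \<in> cb_deriv H" using G'(1) unfolding cb_deriv_def by blast
qed

lemma hereditary_cb_iter: "hereditary H \<Longrightarrow> hereditary (cb_iter H z)"
proof (induction z)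
  case OZ then show ?case by simp
next
  case (OS z) then show ?case by (simp add: hereditary_deriv)
next
  case (OL f)
  have h: "\<And>n. hereditary (cb_iter H (f n))" using OL by simp
  show ?case unfolding hereditary_def
  proof (intro ballI allI impI)
    fix E G assume E: "E \<in> cb_iter H (OL f)" and G: "G \<subseteq> E"
    have "E \<in> cb_iter H (f n)" for n using E by simp
    then have "G \<in> cb_iter H (f n)" for n using h[of n] G unfolding hereditary_def by blast
    then show "G \<in> cb_iter H (OL f)" by simp
  qed
qed

lemma cb_iter_OL_empty:
  assumes "hereditary H" "cb_iter H (OL g) = {}"
  shows "\<exists>n. cb_iter H (g n) = {}"
proof (rule ccontr)
  assume nt: "\<not> ?thesis"
  have "\<forall>n. {} \<in> cb_iter H (g n)"
  proof
    fix n
    have "cb_iter H (g n) \<noteq> {}" using nt by blast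
    then obtain E where "E \<in> cb_iter H (g n)" by blast
    then show "{} \<in> cb_iter H (g n)"
      using hereditary_cb_iter[OF assms(1), of "g n"] unfolding hereditary_def by blast
  qed
  then show False using assms(2) by auto
qed

lemma cb_iter_map:
  assumes "\<And>G G'. G \<in> A \<Longrightarrow> G' \<in> A \<Longrightarrow> G \<subset> G' \<Longrightarrow> \<phi> G \<subset> \<phi> G'"
    and "\<And>G. G \<in> A \<Longrightarrow> \<phi> G \<in> K"
  shows "G \<in> cb_iter A z \<Longrightarrow> \<phi> G \<in> cb_iter K z"
proof (induction z arbitrary: G)
  case OZ then show ?case using assms(2) by simp
next
  case (OS z)
  then obtain G' where G: "G \<in> cb_iter A z" "G' \<in> cb_iter A z" "G \<subset> G'"
    by (auto simp: cb_deriv_def)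
  then have "\<phi> G \<subset> \<phi> G'" using assms(1) cb_iter_sub by blast
  then show ?case using G OS.IH by (auto simp: cb_deriv_def)
next
  case (OL f) then show ?case by auto
qed

lemma fam_comp_cases:
  assumes "E \<in> fam_comp G F"
  obtains "E = {}" | Es where "E = \<Union>(set Es)" "Es \<noteq> []" "\<forall>X\<in>set Es. X \<in> F \<and> X \<noteq> {}"
    "\<forall>i. Suc i < length Es \<longrightarrow> Max (Es ! i) < Min (Es ! Suc i)" "Min ` set Es \<in> G"
  using assms unfolding fam_comp_def by blast

lemma fam_comp_fin:
  assumes "\<And>X. X \<in> F \<Longrightarrow> finite X \<and> X \<subseteq> {1..}" "E \<in> fam_comp G F"
  shows "finite E \<and> E \<subseteq> {1..}"
  using assms(2)
proof (cases rule: fam_comp_cases)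
  case 1 then show ?thesis by simp
next
  case (2 Es)
  have "\<forall>X\<in>set Es. finite X \<and> X \<subseteq> {1..}" using 2(3) assms(1) by blast
  then show ?thesis using 2(1) by auto
qed

lemma schreier_fin: "E \<in> schreier z \<Longrightarrow> finite E \<and> E \<subseteq> {1..}"
proof (induction z arbitrary: E)
  case OZ then show ?case by (auto simp: schreier0_def)
next
  case (OS z) then show ?case using fam_comp_fin by (metis schreier.simps(2))
next
  case (OL f)
  show ?case
  proof (cases "E = {}")
    case True then show ?thesis by simp
  next
    case False
    then have "E \<in> fam_comp schreier1 (schreier (f (Min E)))" using OL.prems by simp
    moreover have "\<And>X. X \<in> schreier (f (Min E)) \<Longrightarrow> finite X \<and> X \<subseteq> {1..}"
      using OL.IH by blast
    ultimately show ?thesis using fam_comp_fin by blast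
  qed
qed

lemma schreier_suc_sub: "schreier z \<subseteq> schreier (OS z)"
proof
  fix E assume E: "E \<in> schreier z"
  show "E \<in> schreier (OS z)"
  proof (cases "E = {}")
    case True then show ?thesis by (simp add: fam_comp_def)
  next
    case False
    have fin: "finite E" "E \<subseteq> {1..}" using schreier_fin[OF E] by auto
    then have "Min E \<ge> 1" using False by auto
    then have "{Min E} \<in> schreier1" by (auto simp: schreier1_def)
    then have "Min ` set [E] \<in> schreier1" by simp
    moreover have "[E] \<noteq> []" "\<forall>X\<in>set [E]. X \<in> schreier z \<and> X \<noteq> {}"
      "\<forall>i. Suc i < length [E] \<longrightarrow> Max ([E] ! i) < Min ([E] ! Suc i)"
      using E False by auto
    ultimately have "\<Union>(set [E]) \<in> fam_comp schreier1 (schreier z)"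
      unfolding fam_comp_def by blast
    then show ?thesis by simp
  qed
qed

definition good :: "nat set set set \<Rightarrow> real \<Rightarrow> nat set \<Rightarrow> nat set \<Rightarrow> (nat \<Rightarrow> real) \<Rightarrow> bool" where
  "good HH \<epsilon> M F a \<longleftrightarrow> F \<noteq> {} \<and> F \<subseteq> M \<and> (\<forall>n\<in>F. a n \<ge> 0) \<and> (\<Sum>n\<in>F. a n) = 1
     \<and> (\<forall>H\<in>HH. \<forall>E\<in>H. (\<Sum>n\<in>E \<inter> F. a n) \<le> \<epsilon>)"

definition Pcl :: "cord \<Rightarrow> bool" where
  "Pcl b \<longleftrightarrow> (\<forall>HH \<epsilon> M. finite HH \<longrightarrow> (\<forall>H\<in>HH. hereditary H \<and> cb_iter H (omega_pow b) = {})
      \<longrightarrow> \<epsilon> > 0 \<longrightarrow> infinite M \<longrightarrow> (\<exists>F a. F \<in> schreier b \<and> good HH \<epsilon> M F a))"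

lemma zero_case: "Pcl OZ"
  unfolding Pcl_def
proof (intro allI impI)
  fix HH :: "nat set set set" and \<epsilon> :: real and M :: "nat set"
  assume hyp: "\<forall>H\<in>HH. hereditary H \<and> cb_iter H (omega_pow OZ) = {}" and e: "\<epsilon> > 0" and M: "infinite M"
  have triv: "E = {}" if "H \<in> HH" "E \<in> H" for H E
  proof (rule ccontr)
    assume ne: "E \<noteq> {}"
    have "{} \<in> H" using hyp that unfolding hereditary_def by blast
    moreover have "{} \<subset> E" using ne by blast
    ultimately have "{} \<in> cb_deriv H" using that(2) unfolding cb_deriv_def by blast
    then show False using hyp that(1) by simp
  qed
  obtain n where n: "n \<in> M" "n \<ge> 1"
  proof -
    have "\<not> M \<subseteq> {0}" using M finite_subset by blast
    then show ?thesis using that by (metis less_one not_le subsetI singletonI)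
  qed
  have "{n} \<in> schreier OZ" using n by (auto simp: schreier0_def)
  moreover have "good HH \<epsilon> M {n} (\<lambda>_. 1)"
  proof -
    have "\<forall>H\<in>HH. \<forall>E\<in>H. (\<Sum>n\<in>E \<inter> {n}. (1::real)) \<le> \<epsilon>"
      using triv e by force
    then show ?thesis unfolding good_def using n by auto
  qed
  ultimately show "\<exists>F a. F \<in> schreier OZ \<and> good HH \<epsilon> M F a" by blast
qed


lemma adm_mono_aux:
  assumes adm: "admissible (OL f)" and "1 \<le> n" "n \<le> N"
  shows "ole (f n) (f N)"
  using assms(3)
proof (induction N rule: dec_induct)
  case base then show ?case by (rule ole_refl)
next
  case (step N)
  have "olt (f N) (f (Suc N))" using adm step.hyps assms(2) by simp
  then show ?case using step.IH olt_ole ole_trans by blast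
qed

lemma adm_mono:
  assumes adm: "admissible (OL f)" and "1 \<le> N" "n \<le> N"
  shows "ole (f n) (f N)"
proof (cases "n = 0")
  case True
  have "ole (f 0) (f 1)" using adm by simp
  moreover have "ole (f 1) (f N)" using adm_mono_aux[OF adm] assms by simp
  ultimately show ?thesis using True ole_trans by blast
next
  case False then show ?thesis using adm_mono_aux[OF adm] assms by simp
qed

lemma adm_schreier:
  assumes adm: "admissible (OL f)" and "1 \<le> N" "N \<le> p"
  shows "schreier (f N) \<subseteq> schreier (OS (f p))"
  using assms(3)
proof (induction p rule: dec_induct)
  case base then show ?case by (rule schreier_suc_sub)
next
  case (step p)
  have "schreier (OS (f p)) \<subseteq> schreier (f (Suc p))" using adm step.hyps assms(2)
    by (simp del: schreier.simps)
  then show ?case using step.IH schreier_suc_sub by blast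
qed

lemma lim_case:
  assumes adm: "admissible (OL f)" and IH: "\<And>n. Pcl (f n)"
  shows "Pcl (OL f)"
  unfolding Pcl_def
proof (intro allI impI)
  fix HH :: "nat set set set" and \<epsilon> :: real and M :: "nat set"
  assume fin: "finite HH" and hyp: "\<forall>H\<in>HH. hereditary H \<and> cb_iter H (omega_pow (OL f)) = {}"
    and e: "\<epsilon> > 0" and M: "infinite M"
  have "\<forall>H\<in>HH. \<exists>n. cb_iter H (omega_pow (f n)) = {}"
  proof
    fix H assume "H \<in> HH"
    have eq: "omega_pow (OL f) = OL (\<lambda>n. omega_pow (f n))" by simp
    have "hereditary H" "cb_iter H (OL (\<lambda>n. omega_pow (f n))) = {}" using hyp \<open>H \<in> HH\<close> unfolding eq by blast+
    then show "\<exists>n. cb_iter H (omega_pow (f n)) = {}" by (rule cb_iter_OL_empty)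
  qed
  then obtain nH where nH: "\<And>H. H \<in> HH \<Longrightarrow> cb_iter H (omega_pow (f (nH H))) = {}" by metis
  define N where "N = Max (insert 1 (nH ` HH))"
  have N1: "1 \<le> N" and NH: "\<And>H. H \<in> HH \<Longrightarrow> nH H \<le> N" unfolding N_def using fin by auto
  have hypN: "\<forall>H\<in>HH. hereditary H \<and> cb_iter H (omega_pow (f N)) = {}"
  proof
    fix H assume H: "H \<in> HH"
    have "ole (omega_pow (f (nH H))) (omega_pow (f N))"
      using adm_mono[OF adm N1 NH[OF H]] by (rule omega_pow_mono)
    then have "cb_iter H (omega_pow (f N)) \<subseteq> cb_iter H (omega_pow (f (nH H)))"
      by (rule cb_iter_antitone)
    then show "hereditary H \<and> cb_iter H (omega_pow (f N)) = {}" using nH[OF H] hyp H by (metis subset_empty)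
  qed
  have M': "infinite (M \<inter> {N..})"
  proof
    assume "finite (M \<inter> {N..})"
    then have "finite ((M \<inter> {N..}) \<union> {..<N})" by simp
    moreover have "M \<subseteq> (M \<inter> {N..}) \<union> {..<N}" by auto
    ultimately show False using M finite_subset by blast
  qed
  obtain F a where F: "F \<in> schreier (f N)" and g: "good HH \<epsilon> (M \<inter> {N..}) F a"
  proof -
    have P: "\<forall>HH \<epsilon> M. finite HH \<longrightarrow> (\<forall>H\<in>HH. hereditary H \<and> cb_iter H (omega_pow (f N)) = {})
      \<longrightarrow> \<epsilon> > 0 \<longrightarrow> infinite M \<longrightarrow> (\<exists>F a. F \<in> schreier (f N) \<and> good HH \<epsilon> M F a)"
      using IH[of N] unfolding Pcl_def .
    have hypN': "\<And>H. H \<in> HH \<Longrightarrow> hereditary H \<and> cb_iter H (omega_pow (f N)) = {}"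
      using hypN by blast
    show ?thesis using P[rule_format, OF fin hypN' e M'] that by blast
  qed
  have Fne: "F \<noteq> {}" and FM: "F \<subseteq> M \<inter> {N..}" using g unfolding good_def by auto
  have "finite F" using schreier_fin[OF F] by simp
  then have "Min F \<in> F" using Fne by simp
  then have "N \<le> Min F" using FM by auto
  then have "F \<in> schreier (OS (f (Min F)))" using adm_schreier[OF adm N1] F by blast
  then have "F \<in> schreier (OL f)" using Fne by simp
  moreover have "good HH \<epsilon> M F a" using g unfolding good_def by auto
  ultimately show "\<exists>F a. F \<in> schreier (OL f) \<and> good HH \<epsilon> M F a" by blast
qed

lemma suc_case:
  assumes IH: "Pcl b" shows "Pcl (OS b)"
  unfolding Pcl_def
proof (intro allI impI)
  fix HH :: "nat set set set" and \<epsilon> :: real and M :: "nat set"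
  assume fin: "finite HH" and hyp: "\<forall>H\<in>HH. hereditary H \<and> cb_iter H (omega_pow (OS b)) = {}"
    and e: "\<epsilon> > 0" and M: "infinite M"
  have P: "\<forall>HH \<epsilon> M. finite HH \<longrightarrow> (\<forall>H\<in>HH. hereditary H \<and> cb_iter H (omega_pow b) = {})
      \<longrightarrow> \<epsilon> > 0 \<longrightarrow> infinite M \<longrightarrow> (\<exists>F a. F \<in> schreier b \<and> good HH \<epsilon> M F a)"
    using IH unfolding Pcl_def .
  have IH': "\<exists>F a. F \<in> schreier b \<and> good HH' \<epsilon>' M' F a"
    if "finite HH'" "\<And>H. H \<in> HH' \<Longrightarrow> hereditary H \<and> cb_iter H (omega_pow b) = {}"
       "\<epsilon>' > 0" "infinite M'" for HH' \<epsilon>' M'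
    using P[rule_format, OF that] .
  define K where "K H r = cb_iter H (omult_nat (omega_pow b) r)" for H r
  have K0: "K H 0 = H" for H by (simp add: K_def)
  have KS: "K H (Suc r) = cb_iter (K H r) (omega_pow b)" for H r
    by (simp add: K_def cb_iter_oadd)
  have Kher: "hereditary (K H r)" if "H \<in> HH" for H r
    using hyp that hereditary_cb_iter unfolding K_def by blast
  have Kmono: "K H r' \<subseteq> K H r" if "r \<le> r'" for H r r'
    using that
  proof (induction r' rule: dec_induct)
    case base then show ?case by simp
  next
    case (step q) then show ?case using KS cb_iter_sub by (metis subset_trans)
  qed
  have "\<forall>H\<in>HH. \<exists>n. K H n = {}"
  proof
    fix H assume H: "H \<in> HH"
    have eq: "omega_pow (OS b) = OL (\<lambda>n. omult_nat (omega_pow b) n)" by simp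
    have "hereditary H" "cb_iter H (OL (\<lambda>n. omult_nat (omega_pow b) n)) = {}"
      using hyp H unfolding eq by blast+
    then have "\<exists>n. cb_iter H (omult_nat (omega_pow b) n) = {}" by (rule cb_iter_OL_empty)
    then show "\<exists>n. K H n = {}" unfolding K_def .
  qed
  then obtain nH where nH: "\<And>H. H \<in> HH \<Longrightarrow> K H (nH H) = {}" by metis
  define N where "N = Max (insert 0 (nH ` HH))"
  have KN: "K H N = {}" if "H \<in> HH" for H
  proof -
    have "nH H \<le> N" unfolding N_def using fin that by auto
    then show ?thesis using Kmono nH[OF that] by (metis subset_empty)
  qed
  define Z where "Z H r s = {G. G \<inter> s = {} \<and> s \<union> G \<in> K H r}" for H r s
  define DD where "DD U = {Z H r s | H r s. H \<in> HH \<and> r < N \<and> s \<subseteq> U \<and> s \<notin> K H (Suc r)}" for U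
  have DDfin: "finite (DD U)" if "finite U" for U
  proof -
    have "DD U \<subseteq> (\<lambda>(H, r, s). Z H r s) ` (HH \<times> {..<N} \<times> Pow U)"
      unfolding DD_def by force
    moreover have "finite (HH \<times> {..<N} \<times> Pow U)" using fin that by simp
    ultimately show ?thesis using finite_subset by blast
  qed
  have DDok: "hereditary D \<and> cb_iter D (omega_pow b) = {}" if Din: "D \<in> DD U" for D U
  proof -
    obtain H r s where D: "D = Z H r s" and H: "H \<in> HH" and r: "r < N" and s: "s \<notin> K H (Suc r)"
      using Din unfolding DD_def by blast
    have hK: "hereditary (K H r)" "hereditary (K H (Suc r))" using Kher H by auto
    have "hereditary D" unfolding hereditary_def D Z_def
    proof (intro ballI allI impI)
      fix G G' assume G: "G \<in> {G. G \<inter> s = {} \<and> s \<union> G \<in> K H r}" and G': "G' \<subseteq> G"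
      have "s \<union> G' \<subseteq> s \<union> G" using G' by blast
      then have "s \<union> G' \<in> K H r" using G hK(1) unfolding hereditary_def by blast
      moreover have "G' \<inter> s = {}" using G G' by blast
      ultimately show "G' \<in> {G. G \<inter> s = {} \<and> s \<union> G \<in> K H r}" by blast
    qed
    moreover have "cb_iter D (omega_pow b) = {}"
    proof (rule ccontr)
      assume "cb_iter D (omega_pow b) \<noteq> {}"
      then obtain G where G: "G \<in> cb_iter D (omega_pow b)" by blast
      have strict: "(\<lambda>G. s \<union> G) G1 \<subset> (\<lambda>G. s \<union> G) G2"
        if G12: "G1 \<in> D" "G2 \<in> D" "G1 \<subset> G2" for G1 G2
      proof -
        obtain x where x: "x \<in> G2" "x \<notin> G1" using G12(3) by blast
        have "x \<notin> s" using G12(2) x(1) unfolding D Z_def by blast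
        then have "x \<notin> s \<union> G1" using x by blast
        moreover have "s \<union> G1 \<subseteq> s \<union> G2" using G12(3) by blast
        ultimately show ?thesis using x(1) by blast
      qed
      have inK: "(\<lambda>G. s \<union> G) G1 \<in> K H r" if "G1 \<in> D" for G1
        using that unfolding D Z_def by blast
      have "s \<union> G \<in> cb_iter (K H r) (omega_pow b)"
        using cb_iter_map[of D "\<lambda>G. s \<union> G" "K H r", OF strict inK G] by simp
      then have "s \<union> G \<in> K H (Suc r)" using KS by simp
      then have "s \<in> K H (Suc r)" using hK(2) unfolding hereditary_def by blast
      then show False using s by blast
    qed
    ultimately show ?thesis by blast
  qed
  obtain m :: nat where m1: "m \<ge> 1" and mN: "real N / real m \<le> \<epsilon> / 2"
  proof -
    obtain m0 :: nat where m0: "real N * 2 / \<epsilon> < real m0" using reals_Archimedean2 by blast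
    define m where "m = Suc m0"
    have "real N * 2 / \<epsilon> < real m" using m0 unfolding m_def by simp
    then have "real N * 2 < real m * \<epsilon>" using e by (simp add: field_simps)
    then have "real N / real m \<le> \<epsilon> / 2" using e unfolding m_def by (simp add: field_simps)
    moreover have "m \<ge> 1" unfolding m_def by simp
    ultimately show ?thesis using that by blast
  qed
  define p where "p U = m + Max (insert 0 U)" for U :: "nat set"
  define ok where "ok U x \<longleftrightarrow> fst x \<in> schreier b \<and> good (DD U) (\<epsilon>/2) (M \<inter> {p U<..}) (fst x) (snd x)"
    for U x
  have stepok: "\<exists>x. ok U x" if Uf: "finite U" for U
  proof -
    have "infinite (M \<inter> {p U<..})"
    proof
      assume "finite (M \<inter> {p U<..})"
      then have "finite ((M \<inter> {p U<..}) \<union> {..p U})" by simp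
      moreover have "M \<subseteq> (M \<inter> {p U<..}) \<union> {..p U}" by auto
      ultimately show False using M finite_subset by blast
    qed
    moreover have "\<epsilon>/2 > 0" using e by simp
    ultimately obtain F a where "F \<in> schreier b \<and> good (DD U) (\<epsilon>/2) (M \<inter> {p U<..}) F a"
      using IH'[OF DDfin[OF Uf] DDok[of _ U]] by blast
    then have "ok U (F, a)" unfolding ok_def by simp
    then show ?thesis by blast
  qed
  have blocks: "\<exists>Bs. length Bs = k \<and> (\<forall>i<k. ok (\<Union>j<i. fst (Bs!j)) (Bs!i))" for k
  proof (induction k)
    case 0 then show ?case by simp
  next
    case (Suc k)
    then obtain Bs where Bs: "length Bs = k" "\<forall>i<k. ok (\<Union>j<i. fst (Bs!j)) (Bs!i)" by blast
    have "finite (fst (Bs!j))" if "j < k" for j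
      using Bs(2) that schreier_fin unfolding ok_def by blast
    then have "finite (\<Union>j<k. fst (Bs!j))" by blast
    then obtain x where x: "ok (\<Union>j<k. fst (Bs!j)) x" using stepok by blast
    have eqU: "(\<Union>j<i. fst ((Bs @ [x])!j)) = (\<Union>j<i. fst (Bs!j))" if "i \<le> k" for i
      using that Bs(1) by (auto simp: nth_append)
    have "\<forall>i<Suc k. ok (\<Union>j<i. fst ((Bs @ [x])!j)) ((Bs @ [x])!i)"
    proof (intro allI impI)
      fix i assume i: "i < Suc k"
      show "ok (\<Union>j<i. fst ((Bs @ [x])!j)) ((Bs @ [x])!i)"
      proof (cases "i < k")
        case True then show ?thesis using eqU[of i] Bs by (simp add: nth_append)
      next
        case False then have "i = k" using i by simp
        then show ?thesis using eqU[of i] Bs x by (simp add: nth_append)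
      qed
    qed
    then show ?case using Bs(1) by (intro exI[of _ "Bs @ [x]"]) simp
  qed
  obtain Bs where Bs: "length Bs = m" "\<forall>i<m. ok (\<Union>j<i. fst (Bs!j)) (Bs!i)"
    using blocks by blast
  define Fb where "Fb i = fst (Bs!i)" for i
  define ab where "ab i = snd (Bs!i)" for i
  define U where "U i = (\<Union>j<i. Fb j)" for i
  have okB: "ok (U i) (Fb i, ab i)" if "i < m" for i
    using Bs(2) that unfolding U_def Fb_def ab_def by simp
  have FbS: "Fb i \<in> schreier b" if "i < m" for i using okB[OF that] unfolding ok_def by simp
  have Fbfin: "finite (Fb i)" if "i < m" for i using schreier_fin[OF FbS[OF that]] by simp
  have Fbne: "Fb i \<noteq> {}" and FbM: "Fb i \<subseteq> M" and Fbgt: "\<And>n. n \<in> Fb i \<Longrightarrow> p (U i) < n"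
    and abnn: "\<And>n. n \<in> Fb i \<Longrightarrow> ab i n \<ge> 0" and absum: "(\<Sum>n\<in>Fb i. ab i n) = 1"
    and absmall: "\<And>D G. D \<in> DD (U i) \<Longrightarrow> G \<in> D \<Longrightarrow> (\<Sum>n\<in>G \<inter> Fb i. ab i n) \<le> \<epsilon>/2"
    if "i < m" for i
    using okB[OF that] unfolding ok_def good_def by auto
  have Ufin: "finite (U i)" if "i \<le> m" for i
    using Fbfin that unfolding U_def by auto
  have Ugt: "x < n" if "i < m" "x \<in> U i" "n \<in> Fb i" for i x n
  proof -
    have "x \<le> Max (insert 0 (U i))" using Ufin[of i] that by simp
    then show ?thesis using Fbgt[OF that(1) that(3)] unfolding p_def by simp
  qed
  have mgt: "m < n" if "i < m" "n \<in> Fb i" for i n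
    using Fbgt[OF that] unfolding p_def by simp
  have disj: "Fb i \<inter> U i = {}" if "i < m" for i
    using Ugt[OF that] by fastforce
  have order: "x < y" if "i < j" "j < m" "x \<in> Fb i" "y \<in> Fb j" for i j x y
    using Ugt[of j x y] that unfolding U_def by blast
  have USuc: "U (Suc i) = U i \<union> Fb i" for i unfolding U_def by (simp add: lessThan_Suc Un_commute)
  have FbU: "Fb i \<subseteq> U m" if "i < m" for i unfolding U_def using that by blast
  define F where "F = U m"
  define a where "a n = (\<Sum>i<m. if n \<in> Fb i then ab i n else 0) / real m" for n
  have Ffin: "finite F" unfolding F_def using Ufin by simp
  have sumform: "(\<Sum>n\<in>G \<inter> F. a n) = (\<Sum>i<m. \<Sum>n\<in>G \<inter> Fb i. ab i n) / real m" for G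
  proof -
    have "(\<Sum>n\<in>G \<inter> F. a n) = (\<Sum>n\<in>G \<inter> F. \<Sum>i<m. if n \<in> Fb i then ab i n else 0) / real m"
      unfolding a_def by (simp add: sum_divide_distrib)
    also have "(\<Sum>n\<in>G \<inter> F. \<Sum>i<m. if n \<in> Fb i then ab i n else 0)
        = (\<Sum>i<m. \<Sum>n\<in>G \<inter> F. if n \<in> Fb i then ab i n else 0)"
      by (rule sum.swap)
    also have "\<dots> = (\<Sum>i<m. \<Sum>n\<in>G \<inter> Fb i. ab i n)"
    proof (rule sum.cong[OF refl])
      fix i assume "i \<in> {..<m}"
      then have sub: "Fb i \<subseteq> F" unfolding F_def using FbU by simp
      have fin2: "finite (G \<inter> F)" using Ffin by simp
      have "(\<Sum>n\<in>G \<inter> F. if n \<in> Fb i then ab i n else 0) = (\<Sum>n\<in>{n \<in> G \<inter> F. n \<in> Fb i}. ab i n)"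
        using sum.inter_filter[OF fin2, of "ab i" "\<lambda>n. n \<in> Fb i"] by simp
      also have "{n \<in> G \<inter> F. n \<in> Fb i} = G \<inter> Fb i" using sub by blast
      finally show "(\<Sum>n\<in>G \<inter> F. if n \<in> Fb i then ab i n else 0) = (\<Sum>n\<in>G \<inter> Fb i. ab i n)" .
    qed
    finally show ?thesis .
  qed
  have m0: "real m > 0" using m1 by simp
  have Fne: "F \<noteq> {}" using Fbne[of 0] FbU[of 0] m1 unfolding F_def by auto
  have FM: "F \<subseteq> M" using FbM unfolding F_def U_def by blast
  have ann: "a n \<ge> 0" if "n \<in> F" for n
    unfolding a_def using abnn m0 by (auto intro!: sum_nonneg divide_nonneg_pos)
  have asum: "(\<Sum>n\<in>F. a n) = 1"
  proof -
    have "(\<Sum>n\<in>F. a n) = (\<Sum>n\<in>F \<inter> F. a n)" by simp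
    also have "\<dots> = (\<Sum>i<m. \<Sum>n\<in>F \<inter> Fb i. ab i n) / real m" by (rule sumform)
    also have "(\<Sum>i<m. \<Sum>n\<in>F \<inter> Fb i. ab i n) = (\<Sum>i<m. (1::real))"
    proof (rule sum.cong[OF refl])
      fix i assume i: "i \<in> {..<m}"
      then have "F \<inter> Fb i = Fb i" using FbU unfolding F_def by auto
      then show "(\<Sum>n\<in>F \<inter> Fb i. ab i n) = 1" using absum i by simp
    qed
    finally show ?thesis using m0 by simp
  qed
  have asmall: "(\<Sum>n\<in>E \<inter> F. a n) \<le> \<epsilon>" if H: "H \<in> HH" and E: "E \<in> H" for H E
  proof -
    define sv where "sv i = (\<Sum>n\<in>E \<inter> Fb i. ab i n)" for i
    define large where "large i \<longleftrightarrow> \<epsilon>/2 < sv i" for i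
    define lg where "lg i = card {l. i \<le> l \<and> l < m \<and> large l}" for i
    have hK: "hereditary (K H r)" for r using Kher[OF H] .
    have lgm: "lg m = 0" unfolding lg_def by simp
    have lgstep: "lg n = (if large n then Suc (lg (Suc n)) else lg (Suc n))" if n: "n < m" for n
    proof -
      have eqs: "{l. n \<le> l \<and> l < m \<and> large l} =
          (if large n then insert n {l. Suc n \<le> l \<and> l < m \<and> large l} else {l. Suc n \<le> l \<and> l < m \<and> large l})"
        using n by (auto simp: le_less Suc_le_eq)
      show ?thesis unfolding lg_def eqs by simp
    qed
    have claim: "E \<inter> U i \<in> K H (min (lg i) N)" if "i \<le> m" for i
      using that
    proof (induction rule: inc_induct)
      case base
      have "E \<inter> U m \<subseteq> E" by blast
      then show ?case using E hK[of 0] K0 lgm unfolding hereditary_def by simp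
    next
      case (step n)
      have n: "n < m" using step.hyps by simp
      have sub: "E \<inter> U n \<subseteq> E \<inter> U (Suc n)" using USuc by blast
      show ?case
      proof (cases "large n")
        case False
        then show ?thesis using step.IH sub hK lgstep[OF n] unfolding hereditary_def by simp
      next
        case True
        show ?thesis
        proof (cases "N \<le> lg (Suc n)")
          case True
          then have "min (lg n) N = min (lg (Suc n)) N" using lgstep[OF n] \<open>large n\<close> by simp
          then show ?thesis using step.IH sub hK unfolding hereditary_def by metis
        next
          case False
          define r where "r = lg (Suc n)"
          have rN: "r < N" using False unfolding r_def by simp
          have minn: "min (lg n) N = Suc r" using lgstep[OF n] \<open>large n\<close> rN unfolding r_def by simp
          have IHr: "E \<inter> U (Suc n) \<in> K H r" using step.IH rN unfolding r_def by simp
          show ?thesis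
          proof (rule ccontr)
            assume nK: "E \<inter> U n \<notin> K H (min (lg n) N)"
            define s where "s = E \<inter> U n"
            define G where "G = E \<inter> Fb n"
            have sK: "s \<notin> K H (Suc r)" using nK minn unfolding s_def by simp
            have ZD: "Z H r s \<in> DD (U n)" unfolding DD_def using H rN sK unfolding s_def by blast
            have Gs: "G \<inter> s = {}" using disj[OF n] unfolding G_def s_def by blast
            have "s \<union> G = E \<inter> U (Suc n)" unfolding s_def G_def USuc by blast
            then have "G \<in> Z H r s" unfolding Z_def using Gs IHr by simp
            then have "(\<Sum>x\<in>G \<inter> Fb n. ab n x) \<le> \<epsilon>/2" using absmall[OF n ZD] by blast
            moreover have "G \<inter> Fb n = E \<inter> Fb n" unfolding G_def by blast
            ultimately have "sv n \<le> \<epsilon>/2" unfolding sv_def by simp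
            then show False using \<open>large n\<close> unfolding large_def by simp
          qed
        qed
      qed
    qed
    have "E \<inter> U 0 \<in> K H (min (lg 0) N)" using claim by simp
    then have "{} \<in> K H (min (lg 0) N)" unfolding U_def by simp
    then have lg0: "lg 0 < N" using KN[OF H] by (metis min.absorb2 not_less empty_iff)
    have lg0eq: "lg 0 = card {i \<in> {..<m}. large i}" unfolding lg_def by (rule arg_cong[of _ _ card]) auto
    have svb: "sv i \<le> (if large i then 1 else 0) + \<epsilon>/2" if i: "i < m" for i
    proof -
      have "sv i \<le> (\<Sum>n\<in>Fb i. ab i n)" unfolding sv_def
        using Fbfin[OF i] abnn[OF i] by (intro sum_mono2) auto
      then have "sv i \<le> 1" using absum[OF i] by simp
      then show ?thesis using e unfolding large_def by auto
    qed
    have "(\<Sum>i<m. sv i) \<le> (\<Sum>i<m. (if large i then 1 else 0) + \<epsilon>/2)"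
      using svb by (intro sum_mono) auto
    also have "\<dots> = (\<Sum>i<m. (if large i then 1 else 0)) + real m * (\<epsilon>/2)"
      by (simp add: sum.distrib)
    also have "(\<Sum>i<m. (if large i then (1::real) else 0)) = real (card {i \<in> {..<m}. large i})"
      using sum.inter_filter[of "{..<m}" "\<lambda>_. (1::real)" large] by simp
    finally have "(\<Sum>i<m. sv i) \<le> real (lg 0) + real m * (\<epsilon>/2)" using lg0eq by simp
    then have "(\<Sum>i<m. sv i) / real m \<le> (real (lg 0) + real m * (\<epsilon>/2)) / real m"
      using m0 by (simp add: divide_right_mono)
    also have "\<dots> = real (lg 0) / real m + \<epsilon>/2" using m0 by (simp add: field_simps)
    also have "\<dots> \<le> real N / real m + \<epsilon>/2" using lg0 m0 by (simp add: divide_right_mono)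
    also have "\<dots> \<le> \<epsilon>" using mN by linarith
    finally show ?thesis using sumform[of E] unfolding sv_def by simp
  qed
  have gd: "good HH \<epsilon> M F a" unfolding good_def using Fne FM ann asum asmall by blast
  have FS: "F \<in> schreier (OS b)"
  proof -
    define Es where "Es = map Fb [0..<m]"
    have setEs: "set Es = Fb ` {..<m}" unfolding Es_def by auto
    have lenEs: "length Es = m" unfolding Es_def by simp
    have nthEs: "Es ! i = Fb i" if "i < m" for i unfolding Es_def using that by simp
    have UEs: "\<Union>(set Es) = F" unfolding setEs F_def U_def by simp
    have Esne: "Es \<noteq> []" using lenEs m1 by auto
    have Esin: "\<forall>X\<in>set Es. X \<in> schreier b \<and> X \<noteq> {}" unfolding setEs using FbS Fbne by blast
    have Essucc: "\<forall>i. Suc i < length Es \<longrightarrow> Max (Es ! i) < Min (Es ! Suc i)"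
    proof (intro allI impI)
      fix i assume i: "Suc i < length Es"
      then have i1: "i < m" "Suc i < m" using lenEs by auto
      have "Max (Fb i) \<in> Fb i" using Fbfin[OF i1(1)] Fbne[OF i1(1)] by simp
      moreover have "Min (Fb (Suc i)) \<in> Fb (Suc i)" using Fbfin[OF i1(2)] Fbne[OF i1(2)] by simp
      ultimately have "Max (Fb i) < Min (Fb (Suc i))" using order[of i "Suc i"] i1 by blast
      then show "Max (Es ! i) < Min (Es ! Suc i)" using nthEs i1 by simp
    qed
    have MS: "Min ` set Es \<in> schreier1"
    proof -
      define MS where "MS = Min ` set Es"
      have MSfin: "finite MS" unfolding MS_def by simp
      have MSne: "MS \<noteq> {}" unfolding MS_def using Esne by simp
      have MSgt: "x > m" if xMS: "x \<in> MS" for x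
      proof -
        obtain i where i: "i < m" "x = Min (Fb i)" using xMS unfolding MS_def setEs by blast
        have "Min (Fb i) \<in> Fb i" using Fbfin[OF i(1)] Fbne[OF i(1)] by simp
        then show ?thesis using mgt[OF i(1)] i(2) by blast
      qed
      have "card MS \<le> card (set Es)" unfolding MS_def by (rule card_image_le) simp
      also have "\<dots> \<le> length Es" by (rule card_length)
      finally have cardMS: "card MS \<le> m" using lenEs by simp
      have "Min MS \<in> MS" using MSfin MSne by simp
      then have "Min MS > m" using MSgt by blast
      then have "card MS \<le> Min MS" using cardMS by simp
      moreover have "MS \<subseteq> {1..}" using MSgt m1 by force
      ultimately have "MS \<in> schreier1" unfolding schreier1_def using MSfin by blast
      then show ?thesis unfolding MS_def .
    qed
    have "\<Union>(set Es) \<in> fam_comp schreier1 (schreier b)"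
      unfolding fam_comp_def using Esne Esin Essucc MS by blast
    then show ?thesis using UEs by simp
  qed
  show "\<exists>F a. F \<in> schreier (OS b) \<and> good HH \<epsilon> M F a" using FS gd by blast
qed

lemma Pcl_all: "admissible \<eta> \<Longrightarrow> Pcl \<eta>"
proof (induction \<eta>)
  case OZ show ?case by (rule zero_case)
next
  case (OS b) then show ?case using suc_case by simp
next
  case (OL f)
  have "\<And>n. Pcl (f n)" using OL by simp
  then show ?case using lim_case OL.prems by blast
qed

lemma uv_sum: "finite E \<Longrightarrow> (\<Sum>i\<in>E. \<bar>unit_vec n i\<bar>) = (if n \<in> E then 1 else 0)"
  unfolding unit_vec_def by (simp add: sum.delta')

theorem proposition3p7:
  fixes \<eta> :: cord and \<F> :: "nat \<Rightarrow> nat set set" and w :: "nat \<Rightarrow> real"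
  assumes "admissible \<eta>" and "olt OZ \<eta>"
    and "\<And>j. j \<ge> 1 \<Longrightarrow> regular_family (\<F> j)"
    and "\<And>j. j \<ge> 1 \<Longrightarrow> contains_singletons (\<F> j)"
    and "\<And>j. j \<ge> 1 \<Longrightarrow> cb_less (\<F> j) (omega_pow \<eta>)"
    and "\<And>n. n \<ge> 1 \<Longrightarrow> w n > 0"
    and "w \<longlonglongrightarrow> 0"
  shows "weakly_null_xi (z0_norm w \<F>) \<eta> unit_vec"
proof -
  note adm = assms(1) and reg = assms(3) and sing = assms(4) and cbl = assms(5)
    and wpos = assms(6) and wlim = assms(7)
  have her: "hereditary (\<F> j)" if "j \<ge> 1" for j using reg[OF that] unfolding regular_family_def by blast
  have Ffin: "finite E" if "j \<ge> 1" "E \<in> \<F> j" for j E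
    using reg[OF that(1)] that(2) unfolding regular_family_def fin_subsets_def by blast
  obtain W where W: "W > 0" "\<And>n. norm (w n) \<le> W"
    using convergent_imp_Bseq[of w] wlim unfolding Bseq_def convergent_def by blast
  define SS where "SS x = {w j * (\<Sum>i\<in>E. \<bar>x i\<bar>) | j E. j \<ge> 1 \<and> E \<in> \<F> j}" for x :: "nat \<Rightarrow> real"
  have zn: "z0_norm w \<F> x = Sup (SS x)" for x unfolding z0_norm_def SS_def by simp
  have SSne: "SS x \<noteq> {}" for x
  proof -
    have "{1} \<in> \<F> 1" using sing[of 1] unfolding contains_singletons_def by simp
    then show ?thesis unfolding SS_def by blast
  qed
  have bnd: "bounded_seq (z0_norm w \<F>) unit_vec"
    unfolding bounded_seq_def
  proof (intro exI allI impI)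
    fix n :: nat assume "n \<ge> 1"
    show "z0_norm w \<F> (unit_vec n) \<le> W" unfolding zn
    proof (rule cSup_least[OF SSne])
      fix v assume "v \<in> SS (unit_vec n)"
      then obtain j E where v: "v = w j * (\<Sum>i\<in>E. \<bar>unit_vec n i\<bar>)" and j: "j \<ge> 1" "E \<in> \<F> j"
        unfolding SS_def by blast
      have "(\<Sum>i\<in>E. \<bar>unit_vec n i\<bar>) \<le> 1" "(\<Sum>i\<in>E. \<bar>unit_vec n i\<bar>) \<ge> 0"
        using uv_sum[OF Ffin[OF j]] by auto
      moreover have "w j \<le> W" "w j > 0" using W(2)[of j] wpos[OF j(1)] by auto
      ultimately show "v \<le> W" unfolding v by (metis mult_left_le order_trans less_imp_le)
    qed
  qed
  have notsm: "\<not> l1_spreading_model (z0_norm w \<F>) \<eta> (unit_vec \<circ> k)" if k: "strict_mono k" for k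
  proof
    assume "l1_spreading_model (z0_norm w \<F>) \<eta> (unit_vec \<circ> k)"
    then obtain \<delta> where d: "\<delta> > 0" and dd: "\<And>F a. F \<in> schreier \<eta> \<Longrightarrow> (\<forall>n\<in>F. a n \<ge> 0) \<and> (\<Sum>n\<in>F. a n) = 1
        \<Longrightarrow> z0_norm w \<F> (\<lambda>i. \<Sum>n\<in>F. a n * (unit_vec \<circ> k) n i) \<ge> \<delta>"
      unfolding l1_spreading_model_def by blast
    obtain J where J: "\<And>j. j \<ge> J \<Longrightarrow> norm (w j - 0) < \<delta>/2"
      using LIMSEQ_D[OF wlim, of "\<delta>/2"] d by auto
    define \<epsilon> where "\<epsilon> = \<delta> / (2 * W)"
    have e: "\<epsilon> > 0" unfolding \<epsilon>_def using d W by simp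
    have We: "W * \<epsilon> = \<delta>/2" unfolding \<epsilon>_def using W by simp
    define Hk where "Hk j = {G. k ` G \<in> \<F> j}" for j
    define HH where "HH = Hk ` {1..<J}"
    have injk: "inj k" using k strict_mono_imp_inj_on by blast
    have HHok: "\<forall>H\<in>HH. hereditary H \<and> cb_iter H (omega_pow \<eta>) = {}"
    proof
      fix H assume "H \<in> HH"
      then obtain j where j: "j \<ge> 1" "H = Hk j" unfolding HH_def by auto
      have "hereditary H" unfolding j Hk_def hereditary_def
      proof (intro ballI allI impI)
        fix G G' assume "G \<in> {G. k ` G \<in> \<F> j}" "G' \<subseteq> G"
        then show "G' \<in> {G. k ` G \<in> \<F> j}" using her[OF j(1)] unfolding hereditary_def
          by (simp add: image_mono)
      qed
      moreover have "cb_iter H (omega_pow \<eta>) = {}"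
      proof (rule ccontr)
        assume "cb_iter H (omega_pow \<eta>) \<noteq> {}"
        then obtain G where G: "G \<in> cb_iter H (omega_pow \<eta>)" by blast
        have strict: "k ` G1 \<subset> k ` G2" if "G1 \<in> H" "G2 \<in> H" "G1 \<subset> G2" for G1 G2
          using that(3) injk by (metis image_mono inj_image_eq_iff psubset_eq)
        have inF: "k ` G1 \<in> \<F> j" if "G1 \<in> H" for G1 using that unfolding j Hk_def by simp
        have "k ` G \<in> cb_iter (\<F> j) (omega_pow \<eta>)"
          using cb_iter_map[of H "\<lambda>G. k ` G" "\<F> j", OF strict inF G] by simp
        moreover obtain \<xi> where "olt \<xi> (omega_pow \<eta>)" "cb_iter (\<F> j) \<xi> = {}"
          using cbl[OF j(1)] unfolding cb_less_def by blast
        then have "cb_iter (\<F> j) (omega_pow \<eta>) = {}"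
          using cb_iter_antitone[OF olt_ole] by (metis subset_empty)
        ultimately show False by simp
      qed
      ultimately show "hereditary H \<and> cb_iter H (omega_pow \<eta>) = {}" by blast
    qed
    have "finite HH" unfolding HH_def by simp
    then obtain F a where F: "F \<in> schreier \<eta>" and g: "good HH \<epsilon> UNIV F a"
      using Pcl_all[OF adm] HHok e unfolding Pcl_def by (meson infinite_UNIV_nat)
    have ann: "\<forall>n\<in>F. a n \<ge> 0" and asum: "(\<Sum>n\<in>F. a n) = 1"
      and asm: "\<And>H E. H \<in> HH \<Longrightarrow> E \<in> H \<Longrightarrow> (\<Sum>n\<in>E \<inter> F. a n) \<le> \<epsilon>"
      using g unfolding good_def by auto
    have finF: "finite F" using schreier_fin[OF F] by simp
    define y where "y i = (\<Sum>n\<in>F. a n * (unit_vec \<circ> k) n i)" for i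
    have "\<delta> \<le> z0_norm w \<F> y" unfolding y_def using dd[OF F] ann asum by blast
    moreover have "z0_norm w \<F> y \<le> \<delta>/2" unfolding zn
    proof (rule cSup_least[OF SSne])
      fix v assume "v \<in> SS y"
      then obtain j E where v: "v = w j * (\<Sum>i\<in>E. \<bar>y i\<bar>)" and j: "j \<ge> 1" "E \<in> \<F> j"
        unfolding SS_def by blast
      have finE: "finite E" using Ffin[OF j] .
      define G where "G = {n. k n \<in> E}"
      have ynn: "y i \<ge> 0" for i unfolding y_def unit_vec_def using ann by (auto intro!: sum_nonneg)
      have "(\<Sum>i\<in>E. \<bar>y i\<bar>) = (\<Sum>i\<in>E. \<Sum>n\<in>F. a n * unit_vec (k n) i)"
        using ynn unfolding y_def by simp
      also have "\<dots> = (\<Sum>n\<in>F. \<Sum>i\<in>E. a n * unit_vec (k n) i)" by (rule sum.swap)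
      also have "\<dots> = (\<Sum>n\<in>F. if k n \<in> E then a n else 0)"
        unfolding unit_vec_def using finE by (simp add: sum.delta' if_distrib cong: if_cong)
      also have "\<dots> = (\<Sum>n\<in>G \<inter> F. a n)"
        using sum.inter_filter[OF finF, of a "\<lambda>n. k n \<in> E"] unfolding G_def
        by (simp add: Int_def conj_commute)
      finally have T: "(\<Sum>i\<in>E. \<bar>y i\<bar>) = (\<Sum>n\<in>G \<inter> F. a n)" .
      have T0: "(\<Sum>n\<in>G \<inter> F. a n) \<ge> 0" using ann by (auto intro!: sum_nonneg)
      have T1: "(\<Sum>n\<in>G \<inter> F. a n) \<le> 1"
        using sum_mono2[OF finF, of "G \<inter> F" a] ann asum by auto
      have wj: "w j > 0" using wpos[OF j(1)] .
      show "v \<le> \<delta>/2"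
      proof (cases "j \<ge> J")
        case True
        then have "w j < \<delta>/2" using J[of j] by simp
        then show ?thesis unfolding v T using T0 T1 wj
          by (metis mult_left_le less_imp_le order_trans)
      next
        case False
        then have "Hk j \<in> HH" unfolding HH_def using j(1) by simp
        moreover have "G \<in> Hk j"
        proof -
          have "k ` G \<subseteq> E" unfolding G_def by blast
          then show ?thesis unfolding Hk_def using her[OF j(1)] j(2) unfolding hereditary_def by blast
        qed
        ultimately have "(\<Sum>n\<in>G \<inter> F. a n) \<le> \<epsilon>" by (rule asm)
        then have "w j * (\<Sum>n\<in>G \<inter> F. a n) \<le> W * \<epsilon>"
          using W(2)[of j] wj T0 by (intro mult_mono) auto
        then show ?thesis unfolding v T We .
      qed
    qed
    ultimately show False using d by simp
  qed
  show ?thesis unfolding weakly_null_xi_def using bnd notsm by blast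
qed

end
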